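(* Let $k,n\ge1$, $\mathbf Q_0,\mathbf Q_1,\dots,\mathbf Q_n\in\mathbb S^k$, and let $\mathcal K\subseteq\mathbb R^k$ be a nonempty closed convex cone such that $\mathcal L:=\{\mathbf x\in\mathcal K:\mathbf e_1^\top\mathbf x=1\}$ is nonempty and bounded. Then the optimal value of $$\sup\ \mathbf Q_0\bullet\mathbf X\quad\text{s.t.}\quad\mathbf e_1\mathbf e_1^\top\bullet\mathbf X=1,\ \mathbf X\in\mathcal{CP}(\mathcal K),\ \mathbf Q_i\bullet\mathbf X=0\ \forall i\in[n]$$ equals the optimal value of $$\inf\ \beta\quad\text{s.t.}\quad\beta\mathbf e_1\mathbf e_1^\top+\sum_{i=1}^n\psi_i\mathbf Q_i-\mathbf Q_0\in\mathcal{COP}(\mathcal K),\ \beta\in\mathbb R,\ \boldsymbol\psi\in\mathbb R^n.$$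
   Context: $\mathbb S^k$ is the space of symmetric $k\times k$ matrices, $\mathbf A\bullet\mathbf B=\mathrm{trace}(\mathbf A\mathbf B)$, $\mathbf e_1$ is the first standard basis vector of $\mathbb R^k$, $[n]=\{1,\dots,n\}$. $\mathcal{COP}(\mathcal K)=\{\mathbf M\in\mathbb S^k:\mathbf x^\top\mathbf M\mathbf x\ge0\ \forall\mathbf x\in\mathcal K\}$ (copositive matrices with respect to $\mathcal K$), and $\mathcal{CP}(\mathcal K)$ is its dual cone in $\mathbb S^k$ under $\bullet$ (completely positive matrices with respect to $\mathcal K$). *)

theory Defs
  imports "HOL-Analysis.Analysis"
begin

definition symmetric_matrices :: "(real^'k^'k) set" where
  "symmetric_matrices = {M. transpose M = M}"

definition frob :: "real^'k^'k \<Rightarrow> real^'k^'k \<Rightarrow> real" (infixl "\<bullet>\<^sub>F" 70) where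
  "A \<bullet>\<^sub>F B = trace (A ** B)"

definition outer :: "real^'k \<Rightarrow> real^'k \<Rightarrow> real^'k^'k" where
  "outer v w = (\<chi> i j. v $ i * w $ j)"

definition COP :: "(real^'k) set \<Rightarrow> (real^'k^'k) set" where
  "COP K = {M \<in> symmetric_matrices. \<forall>x\<in>K. x \<bullet> (M *v x) \<ge> 0}"

definition CP :: "(real^'k) set \<Rightarrow> (real^'k^'k) set" where
  "CP K = {X \<in> symmetric_matrices. \<forall>M\<in>COP K. M \<bullet>\<^sub>F X \<ge> 0}"

end

theory Submission
  imports Defs
begin

lemma frob_eq: "A \<bullet>\<^sub>F B = A \<bullet> transpose B"
  by (simp add: frob_def trace_def matrix_matrix_mult_def inner_vec_def transpose_def)

lemma sym_iff: "M \<in> symmetric_matrices \<longleftrightarrow> (\<forall>i j. M$i$j = M$j$i)"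
  by (auto simp: symmetric_matrices_def transpose_def vec_eq_iff)

lemma sym_frob: "B \<in> symmetric_matrices \<Longrightarrow> A \<bullet>\<^sub>F B = A \<bullet> B"
  by (simp add: frob_eq symmetric_matrices_def)

lemma quad: "x \<bullet> (M *v x) = M \<bullet> outer x x"
  by (simp add: inner_vec_def matrix_vector_mult_def outer_def sum_distrib_left mult_ac)

lemma outer_sym: "outer x x \<in> symmetric_matrices"
  by (simp add: sym_iff outer_def mult.commute)

lemma outer_CP: "x \<in> K \<Longrightarrow> outer x x \<in> CP K"
  unfolding CP_def COP_def using outer_sym by (auto simp: sym_frob quad[symmetric])

lemma outer_mv: "outer e e *v x = (e \<bullet> x) *\<^sub>R e"
  by (simp add: vec_eq_iff matrix_vector_mult_def outer_def inner_vec_def sum_distrib_left sum_distrib_right mult_ac)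

lemma E_outer: "outer e e \<bullet> outer x x = (e \<bullet> x)^2"
  by (simp add: quad[symmetric] outer_mv power2_eq_square inner_commute)

lemma outer_scale: "outer (c *\<^sub>R y) (c *\<^sub>R y) = (c*c) *\<^sub>R outer y y"
  by (simp add: vec_eq_iff outer_def mult_ac)

lemma span_img:
  fixes Q :: "'i \<Rightarrow> 'a::euclidean_space"
  assumes "finite I"
  shows "y \<in> span (Q ` I) \<Longrightarrow> \<exists>c. y = (\<Sum>i\<in>I. c i *\<^sub>R Q i)"
  using assms
proof (induction I arbitrary: y rule: finite_induct)
  case empty
  then show ?case by simp
next
  case (insert i I)
  then obtain k where k: "y - k *\<^sub>R Q i \<in> span (Q ` I)"
    using span_breakdown_eq[of y "Q i" "Q ` I"] by auto
  then obtain c where c: "y - k *\<^sub>R Q i = (\<Sum>j\<in>I. c j *\<^sub>R Q j)" using insert by blast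
  have "(\<Sum>j\<in>I. (c(i:=k)) j *\<^sub>R Q j) = (\<Sum>j\<in>I. c j *\<^sub>R Q j)"
    using insert(2) by (intro sum.cong) auto
  then have "y = (\<Sum>j\<in>insert i I. (c(i:=k)) j *\<^sub>R Q j)"
    using insert(1,2) c by (simp add: algebra_simps)
  then show ?case by blast
qed

lemma span_rep:
  fixes Q :: "'i \<Rightarrow> 'a::euclidean_space"
  assumes "finite I" and h: "\<And>Y. (\<forall>i\<in>I. Q i \<bullet> Y = 0) \<Longrightarrow> G \<bullet> Y = 0"
  shows "\<exists>c. G = (\<Sum>i\<in>I. c i *\<^sub>R Q i)"
proof -
  obtain y z where y: "y \<in> span (Q ` I)" and z: "\<And>w. w \<in> span (Q ` I) \<Longrightarrow> orthogonal z w"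
    and G: "G = y + z"
    using orthogonal_subspace_decomp_exists by blast
  have "\<forall>i\<in>I. Q i \<bullet> z = 0"
  proof
    fix i assume "i \<in> I"
    then have "Q i \<in> span (Q ` I)" by (intro span_base) simp
    then have "orthogonal z (Q i)" by (rule z)
    then show "Q i \<bullet> z = 0" by (simp add: orthogonal_def inner_commute)
  qed
  then have "G \<bullet> z = 0" using h by blast
  moreover have "y \<bullet> z = 0" using z[OF y] by (simp add: orthogonal_def inner_commute)
  ultimately have "z \<bullet> z = 0" using G by (simp add: inner_add_left)
  then have "G = y" using G by simp
  then show ?thesis using span_img[OF assms(1) y] by simp
qed


lemma K_add:
  assumes "convex K" "cone K" "x \<in> K" "y \<in> K"
  shows "x + y \<in> K"
proof -
  have "(1/2) *\<^sub>R x + (1/2) *\<^sub>R y \<in> K"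
    using assms by (intro convexD) auto
  then have "2 *\<^sub>R ((1/2) *\<^sub>R x + (1/2) *\<^sub>R y) \<in> K"
    using assms(2) by (simp add: cone_def)
  then show ?thesis by (simp add: scaleR_add_right)
qed

lemma K_zero:
  fixes K :: "(real^'k) set"
  assumes "convex K" "cone K" "{x \<in> K. x $ i1 = 1} \<noteq> {}" "bounded {x \<in> K. x $ i1 = 1}"
    and "z \<in> K" "z $ i1 = 0"
  shows "z = 0"
proof (rule ccontr)
  assume nz: "z \<noteq> 0"
  obtain y where y: "y \<in> K" "y $ i1 = 1" using assms(3) by auto
  obtain B where B: "\<And>w. w \<in> {x \<in> K. x $ i1 = 1} \<Longrightarrow> norm w \<le> B"
    using assms(4) bounded_iff by metis
  define t where "t = (B + norm y + 1) / norm z"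
  have nzp: "norm z > 0" using nz by simp
  have "norm y \<le> B" using B y by blast
  then have "B + norm y + 1 > 0" using norm_ge_zero[of y] by linarith
  then have Bp: "B + norm y + 1 > 0" .
  then have tpos: "t \<ge> 0" unfolding t_def using nzp by (simp add: divide_nonneg_pos)
  have "t *\<^sub>R z \<in> K" using assms(2,5) tpos by (simp add: cone_def)
  then have "y + t *\<^sub>R z \<in> K" using K_add[OF assms(1,2)] y by blast
  moreover have "(y + t *\<^sub>R z) $ i1 = 1" using y assms(6) by simp
  ultimately have "norm (y + t *\<^sub>R z) \<le> B" using B by blast
  moreover have "norm (t *\<^sub>R z) \<le> norm (y + t *\<^sub>R z) + norm y"
    using norm_triangle_ineq4[of "y + t *\<^sub>R z" y] by simp
  moreover have "norm (t *\<^sub>R z) = B + norm y + 1"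
    using tpos nzp Bp by (simp add: t_def)
  ultimately show False by linarith
qed

theorem lemma8:
  fixes K :: "(real^'k) set"
    and i1 :: 'k
    and Q :: "nat \<Rightarrow> real^'k^'k"
    and n :: nat
  defines "e1 \<equiv> axis i1 (1::real)"
  assumes "n \<ge> 1"
    and "\<forall>i\<in>{0..n}. Q i \<in> symmetric_matrices"
    and "K \<noteq> {}" and "closed K" and "convex K" and "cone K"
    and "{x \<in> K. e1 \<bullet> x = 1} \<noteq> {}"
    and "bounded {x \<in> K. e1 \<bullet> x = 1}"
  shows "(SUP X \<in> {X. outer e1 e1 \<bullet>\<^sub>F X = 1 \<and> X \<in> CP K \<and> (\<forall>i\<in>{1..n}. Q i \<bullet>\<^sub>F X = 0)}.
            ereal (Q 0 \<bullet>\<^sub>F X))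
       = (INF \<beta> \<in> {\<beta>::real. \<exists>\<psi>::nat \<Rightarrow> real.
            \<beta> *\<^sub>R outer e1 e1 + (\<Sum>i=1..n. \<psi> i *\<^sub>R Q i) - Q 0 \<in> COP K}.
            ereal \<beta>)"
    (is "?P = ?D")
proof -
  define E where "E = outer e1 e1"
  define Fe where "Fe = {X. outer e1 e1 \<bullet>\<^sub>F X = 1 \<and> X \<in> CP K \<and> (\<forall>i\<in>{1..n}. Q i \<bullet>\<^sub>F X = 0)}"
  define Ds where "Ds = {\<beta>::real. \<exists>\<psi>::nat \<Rightarrow> real.
            \<beta> *\<^sub>R outer e1 e1 + (\<Sum>i=1..n. \<psi> i *\<^sub>R Q i) - Q 0 \<in> COP K}"
  have e1x: "\<And>x. e1 \<bullet> x = x $ i1" using \<open>e1 \<equiv> axis i1 (1::real)\<close> by (simp add: inner_axis')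
  have Qsym: "\<And>i. i \<in> {0..n} \<Longrightarrow> Q i \<in> symmetric_matrices" using assms(3) by blast
  have Ksum: "\<And>x y. x \<in> K \<Longrightarrow> y \<in> K \<Longrightarrow> x + y \<in> K" using K_add assms(6,7) by blast
  have Kz: "\<And>z. z \<in> K \<Longrightarrow> z $ i1 = 0 \<Longrightarrow> z = 0"
    using K_zero[OF assms(6,7), of i1] assms(8,9) by (simp add: e1x)
  have Kscale: "\<And>x c. x \<in> K \<Longrightarrow> c \<ge> 0 \<Longrightarrow> c *\<^sub>R x \<in> K" using assms(7) by (simp add: cone_def)
  have weak: "Q 0 \<bullet>\<^sub>F X \<le> \<beta>" if X: "X \<in> Fe" and b: "\<beta> \<in> Ds" for X \<beta>
  proof -
    obtain \<psi> where M: "\<beta> *\<^sub>R outer e1 e1 + (\<Sum>i=1..n. \<psi> i *\<^sub>R Q i) - Q 0 \<in> COP K"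
      using b unfolding Ds_def by blast
    have Xs: "X \<in> symmetric_matrices" and XC: "X \<in> CP K" using X unfolding Fe_def CP_def by auto
    have "0 \<le> (\<beta> *\<^sub>R outer e1 e1 + (\<Sum>i=1..n. \<psi> i *\<^sub>R Q i) - Q 0) \<bullet>\<^sub>F X"
      using M XC unfolding CP_def by blast
    also have "\<dots> = \<beta> * (outer e1 e1 \<bullet>\<^sub>F X) + (\<Sum>i=1..n. \<psi> i * (Q i \<bullet>\<^sub>F X)) - Q 0 \<bullet>\<^sub>F X"
      using Xs by (simp add: sym_frob inner_add_left inner_diff_left inner_sum_left)
    also have "\<dots> = \<beta> - Q 0 \<bullet>\<^sub>F X" using X unfolding Fe_def by simp
    finally show ?thesis by simp
  qed
  have le1: "?P \<le> ?D"
    unfolding Fe_def[symmetric] Ds_def[symmetric]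
    by (rule SUP_least, rule INF_greatest) (simp add: weak)
  define G0 where "G0 = {x \<in> K. x $ i1 = 1 \<or> x $ i1 = -1}"
  define L where "L = {x \<in> K. x $ i1 = 1}"
  have L_ne: "L \<noteq> {}" and L_bd: "bounded L" using assms(8,9) by (simp_all add: L_def e1x)
  have G0_sub: "G0 \<subseteq> L \<union> uminus ` L"
  proof
    fix x assume x: "x \<in> G0"
    show "x \<in> L \<union> uminus ` L"
    proof (cases "x $ i1 = 1")
      case True then show ?thesis using x by (auto simp: G0_def L_def)
    next
      case False
      then have x1: "x $ i1 = -1" and xK: "x \<in> K" using x by (auto simp: G0_def)
      obtain y where y: "y \<in> L" using L_ne by blast
      have "x + y = 0" using Kz[OF Ksum[OF xK, of y]] y x1 by (auto simp: L_def)
      then have "x = - y" by (simp add: add_eq_0_iff2)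
      then show ?thesis using y by blast
    qed
  qed
  have G0_bd: "bounded G0"
    using bounded_subset[OF _ G0_sub] L_bd by (simp add: bounded_Un)
  have G0_cl: "closed G0"
  proof -
    have "G0 = K \<inter> ({x. x $ i1 = 1} \<union> {x. x $ i1 = -1})" by (auto simp: G0_def)
    moreover have "closed {x::real^'k. x $ i1 = 1}" "closed {x::real^'k. x $ i1 = -1}"
      by (simp_all add: closed_Collect_eq continuous_on_component)
    ultimately show ?thesis using assms(5) by (simp add: closed_Int closed_Un)
  qed
  have G0_cp: "compact G0" using G0_bd G0_cl by (simp add: compact_eq_bounded_closed)
  have G0_ne: "G0 \<noteq> {}" using L_ne by (auto simp: G0_def L_def)
  define C where "C = convex hull ((\<lambda>x. outer x x) ` G0)"
  have outer_cont: "continuous_on UNIV (\<lambda>x::real^'k. outer x x)"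
    unfolding outer_def by (intro continuous_intros)
  have C_cp: "compact C" unfolding C_def
    by (intro compact_convex_hull compact_continuous_image continuous_on_subset[OF outer_cont] G0_cp) auto
  have C_cv: "convex C" unfolding C_def by simp
  have C_ne: "C \<noteq> {}" unfolding C_def using G0_ne by simp
  have gen_C: "outer y y \<in> C" if "y \<in> G0" for y
    unfolding C_def using that by (intro hull_inc) auto
  have C_sub: "C \<subseteq> {X. X \<in> CP K \<and> E \<bullet> X = 1}"
    unfolding C_def
  proof (rule hull_minimal)
    show "(\<lambda>x. outer x x) ` G0 \<subseteq> {X. X \<in> CP K \<and> E \<bullet> X = 1}"
      using outer_CP by (auto simp: G0_def E_def E_outer e1x)
    show "convex {X. X \<in> CP K \<and> E \<bullet> X = 1}"
      unfolding convex_def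
    proof (intro ballI allI impI, clarsimp)
      fix X Y :: "real^'k^'k" and u v :: real
      assume h: "X \<in> CP K" "E \<bullet> X = 1" "Y \<in> CP K" "E \<bullet> Y = 1" "0 \<le> u" "0 \<le> v" "u + v = 1"
      have sX: "X \<in> symmetric_matrices" and sY: "Y \<in> symmetric_matrices" using h unfolding CP_def by auto
      have sZ: "u *\<^sub>R X + v *\<^sub>R Y \<in> symmetric_matrices" using sX sY by (simp add: sym_iff)
      have "\<forall>M\<in>COP K. 0 \<le> M \<bullet>\<^sub>F (u *\<^sub>R X + v *\<^sub>R Y)"
      proof
        fix M assume M: "M \<in> COP K"
        have "0 \<le> M \<bullet>\<^sub>F X" "0 \<le> M \<bullet>\<^sub>F Y" using h M unfolding CP_def by auto
        then have "0 \<le> u * (M \<bullet> X) + v * (M \<bullet> Y)" using sX sY h by (simp add: sym_frob)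
        then show "0 \<le> M \<bullet>\<^sub>F (u *\<^sub>R X + v *\<^sub>R Y)" using sZ by (simp add: sym_frob inner_add_right)
      qed
      then have "u *\<^sub>R X + v *\<^sub>R Y \<in> CP K" using sZ unfolding CP_def by blast
      moreover have "E \<bullet> (u *\<^sub>R X + v *\<^sub>R Y) = 1" using h by (simp add: inner_add_right)
      ultimately show "u *\<^sub>R X + v *\<^sub>R Y \<in> CP K \<and> E \<bullet> (u *\<^sub>R X + v *\<^sub>R Y) = 1" by blast
    qed
  qed
  have cert: "r \<in> Ds" if h: "\<And>y. y \<in> G0 \<Longrightarrow> Q 0 \<bullet> outer y y - (\<Sum>i=1..n. \<psi> i * (Q i \<bullet> outer y y)) \<le> r"
    for r \<psi>
  proof -
    define M where "M = r *\<^sub>R outer e1 e1 + (\<Sum>i=1..n. \<psi> i *\<^sub>R Q i) - Q 0"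
    have Msym: "M \<in> symmetric_matrices"
    proof -
      have "\<And>i a b. i \<in> {0..n} \<Longrightarrow> Q i $ a $ b = Q i $ b $ a" using Qsym by (simp add: sym_iff)
      then show ?thesis unfolding M_def sym_iff
        by (auto simp: outer_def sum_component mult.commute intro!: sum.cong)
    qed
    have Mq: "M \<bullet> outer y y = r * (y $ i1)^2 + (\<Sum>i=1..n. \<psi> i * (Q i \<bullet> outer y y)) - Q 0 \<bullet> outer y y" for y
      unfolding M_def by (simp add: inner_add_left inner_diff_left inner_sum_left E_outer e1x)
    have "0 \<le> x \<bullet> (M *v x)" if x: "x \<in> K" for x
    proof (cases "x = 0")
      case True then show ?thesis by simp
    next
      case False
      define s where "s = x $ i1"
      have s0: "s \<noteq> 0" unfolding s_def using Kz[OF x] False by auto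
      define y where "y = (1 / \<bar>s\<bar>) *\<^sub>R x"
      have yK: "y \<in> K" unfolding y_def using Kscale x by simp
      have "y $ i1 = s / \<bar>s\<bar>" by (simp add: y_def s_def)
      then have y1: "y $ i1 = 1 \<or> y $ i1 = -1" using s0 by (auto simp: abs_if)
      have yG: "y \<in> G0" using yK y1 by (simp add: G0_def)
      have xy: "x = \<bar>s\<bar> *\<^sub>R y" using s0 by (simp add: y_def)
      have y2: "(y $ i1)^2 = 1" using y1 by auto
      have "0 \<le> M \<bullet> outer y y" using h[OF yG] by (simp add: Mq y2)
      then have "0 \<le> (\<bar>s\<bar> * \<bar>s\<bar>) * (M \<bullet> outer y y)" by simp
      also have "\<dots> = x \<bullet> (M *v x)" by (simp add: quad xy outer_scale)
      finally show ?thesis .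
    qed
    then have "M \<in> COP K" using Msym unfolding COP_def by blast
    then show ?thesis unfolding Ds_def M_def by blast
  qed
  have main: "r \<in> Ds" if rP: "?P < ereal r" for r
  proof -
    have feas_lt: "Q 0 \<bullet>\<^sub>F X < r" if "X \<in> Fe" for X
    proof -
      have "ereal (Q 0 \<bullet>\<^sub>F X) \<le> ?P" unfolding Fe_def[symmetric] using that by (rule SUP_upper)
      then have "ereal (Q 0 \<bullet>\<^sub>F X) < ereal r" using rP by (rule le_less_trans)
      then show ?thesis by simp
    qed
    define W where "W = (\<Inter>i\<in>{1..n}. {Y::real^'k^'k. Q i \<bullet> Y = 0})"
    define S where "S = (\<lambda>X. (X, Q 0 \<bullet> X)) ` C"
    define T where "T = W \<times> {r..}"
    have lin: "linear (\<lambda>X::real^'k^'k. (X, Q 0 \<bullet> X))"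
      by (simp add: linear_iff inner_add_right)
    have S_cp: "compact S" unfolding S_def
      by (intro compact_continuous_image C_cp continuous_intros)
    have S_cv: "convex S" unfolding S_def using convex_linear_image[OF lin C_cv] .
    have S_ne: "S \<noteq> {}" using C_ne by (simp add: S_def)
    have T_cv: "convex T" unfolding T_def W_def
      by (intro convex_Times convex_INT ballI convex_hyperplane) simp
    have T_cl: "closed T" unfolding T_def W_def
      by (intro closed_Times closed_INT ballI closed_hyperplane) simp
    have disj: "S \<inter> T = {}"
    proof (rule ccontr)
      assume "S \<inter> T \<noteq> {}"
      then obtain X where XC: "X \<in> C" and XW: "X \<in> W" and Xr: "Q 0 \<bullet> X \<ge> r"
        unfolding S_def T_def by auto
      have XCP: "X \<in> CP K" and XE: "E \<bullet> X = 1" using C_sub XC by auto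
      have Xs: "X \<in> symmetric_matrices" using XCP unfolding CP_def by auto
      have "X \<in> Fe" using XCP XE XW Xs unfolding Fe_def W_def E_def by (simp add: sym_frob)
      then have "Q 0 \<bullet>\<^sub>F X < r" by (rule feas_lt)
      then show False using Xr Xs by (simp add: sym_frob)
    qed
    obtain a b where ha: "\<forall>x\<in>S. inner a x < b" and hb: "\<forall>x\<in>T. inner a x > b"
      using separating_hyperplane_compact_closed[OF S_cv S_cp S_ne T_cv T_cl disj] by blast
    obtain Gm g where a: "a = (Gm, g)" by (cases a)
    have hS: "Gm \<bullet> X + g * (Q 0 \<bullet> X) < b" if "X \<in> C" for X
      using ha that unfolding S_def a by auto
    have hT: "Gm \<bullet> Y + g * t > b" if "Y \<in> W" "t \<ge> r" for Y t
      using hb that unfolding T_def a by auto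
    have W0: "0 \<in> W" unfolding W_def by simp
    have br: "b < g * r" using hT[OF W0, of r] by simp
    have g0: "g \<ge> 0"
    proof (rule ccontr)
      assume "\<not> g \<ge> 0"
      then have gn: "g < 0" by simp
      define t where "t = r + (\<bar>b\<bar> + \<bar>g * r\<bar>) / (- g)"
      have "(\<bar>b\<bar> + \<bar>g * r\<bar>) / (- g) \<ge> 0" using gn by (intro divide_nonneg_pos) auto
      then have "t \<ge> r" unfolding t_def by linarith
      have "g * t = g * r - (\<bar>b\<bar> + \<bar>g * r\<bar>)" using gn unfolding t_def by (simp add: field_simps)
      then have "g * t \<le> b" by linarith
      then show False using hT[OF W0 \<open>t \<ge> r\<close>] by simp
    qed
    have GW: "Gm \<bullet> Y = 0" if Y: "\<forall>i\<in>{1..n}. Q i \<bullet> Y = 0" for Y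
    proof (rule ccontr)
      assume nz: "Gm \<bullet> Y \<noteq> 0"
      define s where "s = (b - g * r - 1) / (Gm \<bullet> Y)"
      have "s *\<^sub>R Y \<in> W" using Y unfolding W_def by simp
      from hT[OF this order_refl] have "b < s * (Gm \<bullet> Y) + g * r" by simp
      moreover have "s * (Gm \<bullet> Y) = b - g * r - 1" using nz unfolding s_def by simp
      ultimately show False by simp
    qed
    obtain c where c: "Gm = (\<Sum>i=1..n. c i *\<^sub>R Q i)"
      using span_rep[of "{1..n}" Q Gm] GW by auto
    have GX: "Gm \<bullet> X = (\<Sum>i=1..n. c i * (Q i \<bullet> X))" for X
      unfolding c by (simp add: inner_sum_left)
    show ?thesis
    proof (cases "g = 0")
      case False
      then have gp: "g > 0" using g0 by simp
      define \<psi> where "\<psi> = (\<lambda>i. - c i / g)"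
      show ?thesis
      proof (rule cert[of \<psi>])
        fix y assume y: "y \<in> G0"
        let ?X = "outer y y"
        have "Gm \<bullet> ?X + g * (Q 0 \<bullet> ?X) < b" using hS[OF gen_C[OF y]] .
        then have lt: "(Gm \<bullet> ?X + g * (Q 0 \<bullet> ?X)) / g < b / g" using gp by (simp add: divide_strict_right_mono)
        have "(Gm \<bullet> ?X) / g + Q 0 \<bullet> ?X = (Gm \<bullet> ?X + g * (Q 0 \<bullet> ?X)) / g"
          using gp by (simp add: add_divide_distrib)
        then have "(Gm \<bullet> ?X) / g + Q 0 \<bullet> ?X < b / g" using lt by simp
        moreover have "b / g < r" using br gp by (simp add: field_simps)
        moreover have "(\<Sum>i=1..n. \<psi> i * (Q i \<bullet> ?X)) = - (Gm \<bullet> ?X) / g"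
          unfolding GX \<psi>_def by (simp add: sum_divide_distrib sum_negf)
        ultimately show "Q 0 \<bullet> ?X - (\<Sum>i=1..n. \<psi> i * (Q i \<bullet> ?X)) \<le> r" by simp
      qed
    next
      case True
      then have bn: "b < 0" using br by simp
      obtain B where B: "\<And>X. X \<in> C \<Longrightarrow> norm X \<le> B"
        using compact_imp_bounded[OF C_cp] unfolding bounded_iff by blast
      define Bd where "Bd = norm (Q 0) * B"
      have Bd: "Q 0 \<bullet> X \<le> Bd" if "X \<in> C" for X
      proof -
        have "Q 0 \<bullet> X \<le> norm (Q 0) * norm X" by (rule norm_cauchy_schwarz)
        also have "\<dots> \<le> norm (Q 0) * B" using B[OF that] by (simp add: mult_left_mono)
        finally show ?thesis unfolding Bd_def .
      qed
      define t where "t = (\<bar>Bd\<bar> + \<bar>r\<bar>) / (- b)"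
      have t0: "t \<ge> 0" unfolding t_def using bn by (intro divide_nonneg_pos) auto
      have tb: "t * b = - (\<bar>Bd\<bar> + \<bar>r\<bar>)" unfolding t_def using bn by (simp add: field_simps)
      define \<psi> where "\<psi> = (\<lambda>i. - t * c i)"
      show ?thesis
      proof (rule cert[of \<psi>])
        fix y assume y: "y \<in> G0"
        let ?X = "outer y y"
        have "Gm \<bullet> ?X < b" using hS[OF gen_C[OF y]] True by simp
        then have "t * (Gm \<bullet> ?X) \<le> t * b" using t0 by (simp add: mult_left_mono)
        moreover have "(\<Sum>i=1..n. \<psi> i * (Q i \<bullet> ?X)) = - t * (Gm \<bullet> ?X)"
          unfolding GX \<psi>_def by (simp add: sum_distrib_left mult.assoc)
        moreover have "Q 0 \<bullet> ?X \<le> Bd" using Bd[OF gen_C[OF y]] .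
        ultimately show "Q 0 \<bullet> ?X - (\<Sum>i=1..n. \<psi> i * (Q i \<bullet> ?X)) \<le> r" using tb by linarith
      qed
    qed
  qed
  have le2: "?D \<le> ?P"
  proof (rule ccontr)
    assume "\<not> ?D \<le> ?P"
    then have "?P < ?D" by simp
    then obtain z where z1: "?P < ereal z" and z2: "ereal z < ?D" using ereal_dense2 by blast
    have "z \<in> Ds" using main[OF z1] .
    then have "?D \<le> ereal z" unfolding Ds_def by (rule INF_lower)
    then show False using z2 by simp
  qed
  show ?thesis using le1 le2 by (rule antisym)
qed

end
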